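(* Let $\mu>0$, $\beta_1,\beta_2,\gamma_1,\gamma_2>0$, $0<\sigma_{21}\le\sigma_{12}\le 1$, $\mathcal R_i=\beta_i/(\gamma_i+\mu)$, and suppose $(\mathcal R_1,\mathcal R_2)\in\Omega^\mu$. Let $S^*$ be the $S$-component of the unique feasible steady state of system (M) with $I_1^*>0$, $I_2^*>0$. Then, for $i=1,2$, $1-\mathcal R_iS^*>0$ and $A_i>0$, where $A_1=\mathcal R_1\gamma_2\sigma_{21}(1-S^* )-(\gamma_2+\mu)(1-\mathcal R_1S^* )$ and $A_2=\mathcal R_2\gamma_1\sigma_{12}(1-S^* )-(\gamma_1+\mu)(1-\mathcal R_2S^* )$.
   Context: System (M) is the two-strain epidemic model for $(S,I_1,I_2,J_1,J_2,R_1,R_2,R_3)$ (the letters $R_1,R_2,R_3$ denote compartments, while $\mathcal R_1,\mathcal R_2$ denote numbers): $S'=\mu-\beta_1(I_1+J_1)S-\beta_2(I_2+J_2)S-\mu S$, $I_1'=\beta_1S(I_1+J_1)-(\mu+\gamma_1)I_1$, $I_2'=\beta_2S(I_2+J_2)-(\mu+\gamma_2)I_2$, $J_1'=\beta_1\sigma_{21}R_2(I_1+J_1)-(\mu+\gamma_1)J_1$, $J_2'=\beta_2\sigma_{12}R_1(I_2+J_2)-(\mu+\gamma_2)J_2$, $R_1'=\gamma_1I_1-\beta_2\sigma_{12}(I_2+J_2)R_1-\mu R_1$, $R_2'=\gamma_2I_2-\beta_1\sigma_{21}(I_1+J_1)R_2-\mu R_2$, $R_3'=\gamma_1J_1+\gamma_2J_2-\mu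 R_3$. A steady state is a zero of the right-hand side; it is feasible if all components are nonnegative and sum to 1. For $\mu\ge 0$, $\Omega^\mu=\Omega^\mu_1\cap\Omega^\mu_2$ where, for $\{i,j\}=\{1,2\}$, $\Omega^\mu_i=\left\{(\mathcal R_1,\mathcal R_2):\ \mathcal R_i>1,\ \mathcal R_j>\dfrac{(\gamma_i+\mu)\mathcal R_i}{(1+\sigma_{ij}(\mathcal R_i-1))\gamma_i+\mu}\right\}$. (For such parameters a unique feasible steady state with $I_1^*>0,I_2^*>0$ exists.) *)

theory Defs
  imports Complex_Main
begin

definition steady_state_M ::
  "real \<Rightarrow> real \<Rightarrow> real \<Rightarrow> real \<Rightarrow> real \<Rightarrow> real \<Rightarrow> real \<Rightarrow>
   real \<Rightarrow> real \<Rightarrow> real \<Rightarrow> real \<Rightarrow> real \<Rightarrow> real \<Rightarrow> real \<Rightarrow> real \<Rightarrow> bool" where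
  "steady_state_M \<mu> \<beta>1 \<beta>2 \<gamma>1 \<gamma>2 \<sigma>12 \<sigma>21 S I1 I2 J1 J2 R1 R2 R3 \<longleftrightarrow>
     \<mu> - \<beta>1 * (I1 + J1) * S - \<beta>2 * (I2 + J2) * S - \<mu> * S = 0 \<and>
     \<beta>1 * S * (I1 + J1) - (\<mu> + \<gamma>1) * I1 = 0 \<and>
     \<beta>2 * S * (I2 + J2) - (\<mu> + \<gamma>2) * I2 = 0 \<and>
     \<beta>1 * \<sigma>21 * R2 * (I1 + J1) - (\<mu> + \<gamma>1) * J1 = 0 \<and>
     \<beta>2 * \<sigma>12 * R1 * (I2 + J2) - (\<mu> + \<gamma>2) * J2 = 0 \<and>
     \<gamma>1 * I1 - \<beta>2 * \<sigma>12 * (I2 + J2) * R1 - \<mu> * R1 = 0 \<and>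
     \<gamma>2 * I2 - \<beta>1 * \<sigma>21 * (I1 + J1) * R2 - \<mu> * R2 = 0 \<and>
     \<gamma>1 * J1 + \<gamma>2 * J2 - \<mu> * R3 = 0"

definition feasible_M ::
  "real \<Rightarrow> real \<Rightarrow> real \<Rightarrow> real \<Rightarrow> real \<Rightarrow> real \<Rightarrow> real \<Rightarrow> real \<Rightarrow> bool" where
  "feasible_M S I1 I2 J1 J2 R1 R2 R3 \<longleftrightarrow>
     S \<ge> 0 \<and> I1 \<ge> 0 \<and> I2 \<ge> 0 \<and> J1 \<ge> 0 \<and> J2 \<ge> 0 \<and> R1 \<ge> 0 \<and> R2 \<ge> 0 \<and> R3 \<ge> 0 \<and>
     S + I1 + I2 + J1 + J2 + R1 + R2 + R3 = 1"

definition Omega1 :: "real \<Rightarrow> real \<Rightarrow> real \<Rightarrow> real \<Rightarrow> (real \<times> real) set" where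
  "Omega1 \<mu> \<gamma>1 \<gamma>2 \<sigma>12 = {(Rn1, Rn2). Rn1 > 1 \<and>
     Rn2 > (\<gamma>1 + \<mu>) * Rn1 / ((1 + \<sigma>12 * (Rn1 - 1)) * \<gamma>1 + \<mu>)}"

definition Omega2 :: "real \<Rightarrow> real \<Rightarrow> real \<Rightarrow> real \<Rightarrow> (real \<times> real) set" where
  "Omega2 \<mu> \<gamma>1 \<gamma>2 \<sigma>21 = {(Rn1, Rn2). Rn2 > 1 \<and>
     Rn1 > (\<gamma>2 + \<mu>) * Rn2 / ((1 + \<sigma>21 * (Rn2 - 1)) * \<gamma>2 + \<mu>)}"

definition Omega :: "real \<Rightarrow> real \<Rightarrow> real \<Rightarrow> real \<Rightarrow> real \<Rightarrow> (real \<times> real) set" where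
  "Omega \<mu> \<gamma>1 \<gamma>2 \<sigma>12 \<sigma>21 = Omega1 \<mu> \<gamma>1 \<gamma>2 \<sigma>12 \<inter> Omega2 \<mu> \<gamma>1 \<gamma>2 \<sigma>21"

end

theory Submission
  imports Defs
begin

theorem lemma3p4:
  fixes \<mu> \<beta>1 \<beta>2 \<gamma>1 \<gamma>2 \<sigma>12 \<sigma>21 :: real
    and S I1 I2 J1 J2 R1 R2 R3 :: real
  assumes "\<mu> > 0" "\<beta>1 > 0" "\<beta>2 > 0" "\<gamma>1 > 0" "\<gamma>2 > 0"
    and "0 < \<sigma>21" "\<sigma>21 \<le> \<sigma>12" "\<sigma>12 \<le> 1"
    and "(\<beta>1 / (\<gamma>1 + \<mu>), \<beta>2 / (\<gamma>2 + \<mu>)) \<in> Omega \<mu> \<gamma>1 \<gamma>2 \<sigma>12 \<sigma>21"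
    and "steady_state_M \<mu> \<beta>1 \<beta>2 \<gamma>1 \<gamma>2 \<sigma>12 \<sigma>21 S I1 I2 J1 J2 R1 R2 R3"
    and "feasible_M S I1 I2 J1 J2 R1 R2 R3"
    and "I1 > 0" "I2 > 0"
  shows "1 - \<beta>1 / (\<gamma>1 + \<mu>) * S > 0 \<and> 1 - \<beta>2 / (\<gamma>2 + \<mu>) * S > 0 \<and>
         \<beta>1 / (\<gamma>1 + \<mu>) * \<gamma>2 * \<sigma>21 * (1 - S) - (\<gamma>2 + \<mu>) * (1 - \<beta>1 / (\<gamma>1 + \<mu>) * S) > 0 \<and>
         \<beta>2 / (\<gamma>2 + \<mu>) * \<gamma>1 * \<sigma>12 * (1 - S) - (\<gamma>1 + \<mu>) * (1 - \<beta>2 / (\<gamma>2 + \<mu>) * S) > 0"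
proof -
  note ss = assms(10)[unfolded steady_state_M_def]
  note fe = assms(11)[unfolded feasible_M_def]
  define x1 where "x1 = I1 + J1"
  define x2 where "x2 = I2 + J2"
  have x1p: "x1 > 0" using fe assms(12) x1_def by linarith
  have x2p: "x2 > 0" using fe assms(13) x2_def by linarith
  have s12: "\<sigma>12 > 0" using assms(6,7) by linarith
  have g1: "\<gamma>1 + \<mu> > 0" "\<gamma>2 + \<mu> > 0" using assms by auto
  have e1: "x1 * (\<beta>1 * (S + \<sigma>21 * R2)) = x1 * (\<gamma>1 + \<mu>)"
    using ss unfolding x1_def by (simp add: algebra_simps)
  hence k1: "\<beta>1 * (S + \<sigma>21 * R2) = \<gamma>1 + \<mu>" using x1p by simp
  have e2: "x2 * (\<beta>2 * (S + \<sigma>12 * R1)) = x2 * (\<gamma>2 + \<mu>)"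
    using ss unfolding x2_def by (simp add: algebra_simps)
  hence k2: "\<beta>2 * (S + \<sigma>12 * R1) = \<gamma>2 + \<mu>" using x2p by simp
  have r2e: "R2 * (\<beta>1 * \<sigma>21 * x1 + \<mu>) = \<gamma>2 * I2"
    using ss unfolding x1_def by (simp add: algebra_simps)
  have r1e: "R1 * (\<beta>2 * \<sigma>12 * x2 + \<mu>) = \<gamma>1 * I1"
    using ss unfolding x2_def by (simp add: algebra_simps)
  have c1: "\<beta>1 * \<sigma>21 * x1 + \<mu> > 0" using assms x1p by (simp add: add_pos_pos)
  have c2: "\<beta>2 * \<sigma>12 * x2 + \<mu> > 0" using assms x2p s12 by (simp add: add_pos_pos)
  have R2p: "R2 > 0"
  proof -
    have "\<gamma>2 * I2 > 0" using assms by simp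
    thus ?thesis using r2e c1 by (metis zero_less_mult_pos2)
  qed
  have R1p: "R1 > 0"
  proof -
    have "\<gamma>1 * I1 > 0" using assms by simp
    thus ?thesis using r1e c2 by (metis zero_less_mult_pos2)
  qed
  have q1: "1 - \<beta>1 / (\<gamma>1 + \<mu>) * S = \<beta>1 / (\<gamma>1 + \<mu>) * \<sigma>21 * R2"
    using g1 k1 by (simp add: field_simps)
  have q2: "1 - \<beta>2 / (\<gamma>2 + \<mu>) * S = \<beta>2 / (\<gamma>2 + \<mu>) * \<sigma>12 * R1"
    using g1 k2 by (simp add: field_simps)
  have b1: "\<gamma>2 * (1 - S) - (\<gamma>2 + \<mu>) * R2 > 0"
  proof -
    have "\<gamma>2 * (1 - S) - (\<gamma>2 + \<mu>) * R2 = \<gamma>2 * (I1 + J1 + J2 + R1 + R3) + \<beta>1 * \<sigma>21 * x1 * R2"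
    proof -
      have "1 - S = I1 + I2 + J1 + J2 + R1 + R2 + R3" using fe by linarith
      hence "\<gamma>2 * (1 - S) = \<gamma>2 * (I1 + I2 + J1 + J2 + R1 + R2 + R3)" by (rule arg_cong)
      also have "\<dots> = \<gamma>2 * (I1 + J1 + J2 + R1 + R3) + \<gamma>2 * I2 + \<gamma>2 * R2"
        by (simp add: algebra_simps)
      finally show ?thesis using r2e by (simp add: algebra_simps)
    qed
    moreover have "\<gamma>2 * (I1 + J1 + J2 + R1 + R3) > 0" using fe assms by simp
    moreover have "\<beta>1 * \<sigma>21 * x1 * R2 > 0" using assms x1p R2p by simp
    ultimately show ?thesis by linarith
  qed
  have b2: "\<gamma>1 * (1 - S) - (\<gamma>1 + \<mu>) * R1 > 0"
  proof -
    have "\<gamma>1 * (1 - S) - (\<gamma>1 + \<mu>) * R1 = \<gamma>1 * (I2 + J1 + J2 + R2 + R3) + \<beta>2 * \<sigma>12 * x2 * R1"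
    proof -
      have "1 - S = I1 + I2 + J1 + J2 + R1 + R2 + R3" using fe by linarith
      hence "\<gamma>1 * (1 - S) = \<gamma>1 * (I1 + I2 + J1 + J2 + R1 + R2 + R3)" by (rule arg_cong)
      also have "\<dots> = \<gamma>1 * (I2 + J1 + J2 + R2 + R3) + \<gamma>1 * I1 + \<gamma>1 * R1"
        by (simp add: algebra_simps)
      finally show ?thesis using r1e by (simp add: algebra_simps)
    qed
    moreover have "\<gamma>1 * (I2 + J1 + J2 + R2 + R3) > 0" using fe assms by simp
    moreover have "\<beta>2 * \<sigma>12 * x2 * R1 > 0" using assms x2p R1p s12 by simp
    ultimately show ?thesis by linarith
  qed
  have A1: "\<beta>1 / (\<gamma>1 + \<mu>) * \<gamma>2 * \<sigma>21 * (1 - S) - (\<gamma>2 + \<mu>) * (1 - \<beta>1 / (\<gamma>1 + \<mu>) * S)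
      = \<beta>1 / (\<gamma>1 + \<mu>) * \<sigma>21 * (\<gamma>2 * (1 - S) - (\<gamma>2 + \<mu>) * R2)"
    unfolding q1 by (simp add: algebra_simps del: times_divide_eq_left times_divide_eq_right)
  have A2: "\<beta>2 / (\<gamma>2 + \<mu>) * \<gamma>1 * \<sigma>12 * (1 - S) - (\<gamma>1 + \<mu>) * (1 - \<beta>2 / (\<gamma>2 + \<mu>) * S)
      = \<beta>2 / (\<gamma>2 + \<mu>) * \<sigma>12 * (\<gamma>1 * (1 - S) - (\<gamma>1 + \<mu>) * R1)"
    unfolding q2 by (simp add: algebra_simps del: times_divide_eq_left times_divide_eq_right)
  show ?thesis
    unfolding A1 A2 unfolding q1 q2
    using assms g1 b1 b2 R1p R2p s12 by simp
qed

end
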